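(* Let $L\subset\mathbb R^n$ be a regular (embedded) surface of dimension $r$, $1\le r\le n-1$, which is a closed subset of $\mathbb R^n$. If the normal (affine) planes of $L$ at distinct points of $L$ are pairwise disjoint, then $L$ is an $r$-dimensional affine plane.
   Context: The normal plane of $L$ at $p\in L$ is the affine $(n-r)$-plane through $p$ orthogonal to $T_pL$. *)

theory Defs
  imports "HOL-Analysis.Analysis"
begin

fun iter_dd :: "('a::real_normed_vector \<Rightarrow> 'b::real_normed_vector) \<Rightarrow> 'a list \<Rightarrow> 'a \<Rightarrow> 'b" where
  "iter_dd f [] = f"
| "iter_dd f (v # vs) = (\<lambda>x. frechet_derivative (iter_dd f vs) (at x) v)"

definition smooth_on :: "'a::euclidean_space set \<Rightarrow> ('a \<Rightarrow> 'b::real_normed_vector) \<Rightarrow> bool" where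
  "smooth_on S f \<longleftrightarrow> (\<forall>vs. iter_dd f vs differentiable_on S)"

definition regular_submanifold :: "nat \<Rightarrow> 'a::euclidean_space set \<Rightarrow> bool" where
  "regular_submanifold r L \<longleftrightarrow>
    (\<forall>p\<in>L. \<exists>U V (\<psi>::'a \<Rightarrow> 'a) (\<phi>::'a \<Rightarrow> 'a) E.
        open U \<and> p \<in> U \<and> open V \<and> subspace E \<and> dim E = r \<and>
        smooth_on U \<psi> \<and> smooth_on V \<phi> \<and> \<psi> ` U = V \<and>
        (\<forall>x\<in>U. \<phi> (\<psi> x) = x) \<and> (\<forall>y\<in>V. \<psi> (\<phi> y) = y) \<and>
        \<psi> ` (L \<inter> U) = V \<inter> E)"

definition tangent_space :: "'a::euclidean_space set \<Rightarrow> 'a \<Rightarrow> 'a set" where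
  "tangent_space L p = {v. \<exists>\<gamma> e. e > 0 \<and> (\<forall>t\<in>ball 0 e. \<gamma> t \<in> L) \<and> \<gamma> 0 = p \<and>
                                (\<gamma> has_vector_derivative v) (at 0)}"

definition normal_plane :: "'a::euclidean_space set \<Rightarrow> 'a \<Rightarrow> 'a set" where
  "normal_plane L p = {x. \<forall>v\<in>tangent_space L p. (x - p) \<bullet> v = 0}"

end

theory Submission
  imports Defs
begin

lemma deriv_in_span:
  fixes g :: "real \<Rightarrow> 'a::euclidean_space"
  assumes d: "(g has_derivative g') (at 0)" and e: "e > 0"
    and in_S: "\<And>t. \<bar>t\<bar> < e \<Longrightarrow> g t \<in> span S"
  shows "g' 1 \<in> span S"
proof -
  obtain m z where m: "m \<in> span S" and z: "\<And>w. w \<in> span S \<Longrightarrow> orthogonal z w"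
     and dec: "g' 1 = m + z"
    by (rule orthogonal_subspace_decomp_exists[of S "g' 1"]) blast
  have d2: "((\<lambda>t. z \<bullet> g t) has_derivative (\<lambda>t. z \<bullet> g' t)) (at 0)"
    using has_derivative_inner_right[OF d] .
  have lin: "linear g'" using d has_derivative_linear by blast
  have "(\<lambda>t. z \<bullet> g' t) = (*) (z \<bullet> g' 1)"
  proof
    fix t :: real
    have "g' t = t *\<^sub>R g' 1" using linear_scale[OF lin, of t 1] by simp
    then show "z \<bullet> g' t = z \<bullet> g' 1 * t" by simp
  qed
  with d2 have "((\<lambda>t. z \<bullet> g t) has_real_derivative (z \<bullet> g' 1)) (at 0)"
    by (simp add: has_field_derivative_def mult.commute)
  moreover have "\<forall>y. \<bar>0 - y\<bar> < e \<longrightarrow> z \<bullet> g 0 \<le> z \<bullet> g y"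
  proof (intro allI impI)
    fix y :: real assume "\<bar>0 - y\<bar> < e"
    then have "g y \<in> span S" "g 0 \<in> span S" using in_S e by auto
    then show "z \<bullet> g 0 \<le> z \<bullet> g y" using z unfolding orthogonal_def by simp
  qed
  ultimately have "z \<bullet> g' 1 = 0" using DERIV_local_min[OF _ e] by blast
  moreover have "z \<bullet> m = 0" using z[OF m] unfolding orthogonal_def by simp
  ultimately have "z \<bullet> z = 0" using dec by (simp add: inner_add_right)
  then have "z = 0" by simp
  then show ?thesis using dec m by simp
qed

lemma nearest_normal:
  fixes L :: "'a::euclidean_space set"
  assumes p: "p \<in> L" and near: "\<forall>l\<in>L. dist x p \<le> dist x l"
  shows "x \<in> normal_plane L p"
  unfolding normal_plane_def
proof (intro CollectI ballI)
  fix v assume "v \<in> tangent_space L p"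
  then obtain \<gamma> e where e: "e > 0" and inL: "\<forall>t\<in>ball 0 e. \<gamma> t \<in> L" and g0: "\<gamma> 0 = p"
    and d: "(\<gamma> has_vector_derivative v) (at 0)"
    unfolding tangent_space_def by blast
  have d1: "(\<gamma> has_derivative (\<lambda>t. t *\<^sub>R v)) (at 0)" using d by (simp add: has_vector_derivative_def)
  have d2: "((\<lambda>t. x - \<gamma> t) has_derivative (\<lambda>t. 0 - t *\<^sub>R v)) (at 0)"
    by (intro has_derivative_diff has_derivative_const d1)
  have d3: "((\<lambda>t. (x - \<gamma> t) \<bullet> (x - \<gamma> t)) has_derivative
      (\<lambda>t. (x - \<gamma> 0) \<bullet> (0 - t *\<^sub>R v) + (0 - t *\<^sub>R v) \<bullet> (x - \<gamma> 0))) (at 0)"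
    using has_derivative_inner[OF d2 d2] by simp
  have "(\<lambda>t. (x - \<gamma> 0) \<bullet> (0 - t *\<^sub>R v) + (0 - t *\<^sub>R v) \<bullet> (x - \<gamma> 0)) = (*) (-2 * ((x - p) \<bullet> v))"
    by (rule ext) (simp add: g0 inner_commute algebra_simps)
  with d3 have d4: "((\<lambda>t. (x - \<gamma> t) \<bullet> (x - \<gamma> t)) has_real_derivative (-2 * ((x - p) \<bullet> v))) (at 0)"
    by (simp add: has_field_derivative_def)
  have "\<forall>y. \<bar>0 - y\<bar> < e \<longrightarrow> (x - \<gamma> 0) \<bullet> (x - \<gamma> 0) \<le> (x - \<gamma> y) \<bullet> (x - \<gamma> y)"
  proof (intro allI impI)
    fix y :: real assume "\<bar>0 - y\<bar> < e"
    then have "\<gamma> y \<in> L" using inL by auto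
    then have "dist x p \<le> dist x (\<gamma> y)" using near by auto
    then have "norm (x - \<gamma> 0) \<le> norm (x - \<gamma> y)" by (simp add: dist_norm g0)
    then have "norm (x - \<gamma> 0) ^ 2 \<le> norm (x - \<gamma> y) ^ 2" by (simp add: power_mono)
    then show "(x - \<gamma> 0) \<bullet> (x - \<gamma> 0) \<le> (x - \<gamma> y) \<bullet> (x - \<gamma> y)" by (simp add: power2_norm_eq_inner)
  qed
  then have "-2 * ((x - p) \<bullet> v) = 0" using DERIV_local_min[OF d4 e] by blast
  then show "(x - p) \<bullet> v = 0" by simp
qed

lemma tangent_in_span:
  fixes L :: "'a::euclidean_space set"
  assumes "q \<in> L" 
  shows "tangent_space L q \<subseteq> span ((\<lambda>l. l - q) ` L)"
proof
  fix v assume "v \<in> tangent_space L q"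
  then obtain \<gamma> e where e: "e > 0" and inL: "\<forall>t\<in>ball 0 e. \<gamma> t \<in> L" and g0: "\<gamma> 0 = q"
    and d: "(\<gamma> has_vector_derivative v) (at 0)"
    unfolding tangent_space_def by blast
  have d1: "(\<gamma> has_derivative (\<lambda>t. t *\<^sub>R v)) (at 0)" using d by (simp add: has_vector_derivative_def)
  have d2: "((\<lambda>t. \<gamma> t - q) has_derivative (\<lambda>t. t *\<^sub>R v - 0)) (at 0)"
    by (intro has_derivative_diff has_derivative_const d1)
  have "(\<lambda>t::real. t *\<^sub>R v - 0) 1 \<in> span ((\<lambda>l. l - q) ` L)"
  proof (rule deriv_in_span[OF d2 e])
    fix t :: real assume "\<bar>t\<bar> < e"
    then have "\<gamma> t \<in> L" using inL by auto
    then show "\<gamma> t - q \<in> span ((\<lambda>l. l - q) ` L)" by (simp add: span_base)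
  qed
  then show "v \<in> span ((\<lambda>l. l - q) ` L)" by simp
qed

theorem theorem1p16:
  fixes L :: "'a::euclidean_space set" and r :: nat
  assumes "1 \<le> r" and "r \<le> DIM('a) - 1"
    and "regular_submanifold r L"
    and "L \<noteq> {}"
    and "closed L"
    and "\<forall>p\<in>L. \<forall>q\<in>L. p \<noteq> q \<longrightarrow> normal_plane L p \<inter> normal_plane L q = {}"
  shows "affine L \<and> aff_dim L = int r"
proof -
  note disj = assms(6)
  obtain q0 where q0: "q0 \<in> L" using assms(4) by blast
  define T where "T q = span (tangent_space L q)" for q
  define M where "M = span ((\<lambda>l. l - q0) ` L)"
  have nearest: "\<exists>p\<in>L. x \<in> normal_plane L p \<and> (\<forall>l\<in>L. dist x p \<le> dist x l)" for x
  proof -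
    obtain p where "p \<in> L" "\<And>y. y \<in> L \<Longrightarrow> dist x p \<le> dist x y"
      using distance_attains_inf[OF assms(5) assms(4), of x] by blast
    then show ?thesis using nearest_normal[of p L x] by blast
  qed
  have uniq: "p = q" if "p\<in>L" "q\<in>L" "x \<in> normal_plane L p" "x \<in> normal_plane L q" for p q x
    using disj that by blast
  have stepA: "y - q \<in> T q" if q: "q \<in> L" and y: "y \<in> L" for q y
  proof -
    obtain s w where s: "s \<in> T q" and w: "\<And>t. t \<in> span (tangent_space L q) \<Longrightarrow> orthogonal w t"
      and dec: "y - q = s + w"
      using orthogonal_subspace_decomp_exists[of "tangent_space L q" "y - q"] unfolding T_def by blast
    show ?thesis
    proof (cases "w = 0")
      case True then show ?thesis using dec s by simp
    next
      case False
      define u where "u = y - q"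
      define c where "c = (u \<bullet> u) / (w \<bullet> w) + 1"
      define x where "x = q + c *\<^sub>R w"
      have ww: "w \<bullet> w > 0" using False by simp
      have xn: "x \<in> normal_plane L q"
        unfolding normal_plane_def x_def using w span_base by (auto simp: orthogonal_def)
      obtain p where p: "p\<in>L" "x \<in> normal_plane L p" "\<forall>l\<in>L. dist x p \<le> dist x l"
        using nearest by blast
      have "p = q" using uniq[OF p(1) q p(2) xn] .
      then have "dist x q \<le> dist x y" using p(3) y by blast
      then have "norm (c *\<^sub>R w) \<le> norm (c *\<^sub>R w - u)"
        by (simp add: dist_norm x_def u_def algebra_simps)
      then have "norm (c *\<^sub>R w) ^ 2 \<le> norm (c *\<^sub>R w - u) ^ 2" by (simp add: power_mono)
      then have ineq: "(c *\<^sub>R w) \<bullet> (c *\<^sub>R w) \<le> (c *\<^sub>R w - u) \<bullet> (c *\<^sub>R w - u)"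
        by (simp only: power2_norm_eq_inner)
      have ws: "w \<bullet> s = 0" using w[of s] s unfolding T_def orthogonal_def by simp
      have wu: "w \<bullet> u = w \<bullet> w" using ws dec unfolding u_def by (simp add: inner_add_right)
      have "(c *\<^sub>R w - u) \<bullet> (c *\<^sub>R w - u) = c * c * (w \<bullet> w) - 2 * c * (w \<bullet> u) + u \<bullet> u"
        by (simp add: inner_diff_left inner_diff_right inner_commute algebra_simps)
      with ineq wu have "2 * (c * (w \<bullet> w)) \<le> u \<bullet> u"
        by (simp add: inner_commute[of u w] algebra_simps)
      moreover have "c * (w \<bullet> w) = u \<bullet> u + w \<bullet> w" unfolding c_def using ww
        by (simp add: field_simps)
      moreover have "u \<bullet> u \<ge> 0" by simp
      ultimately show ?thesis using ww by linarith
    qed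
  qed
  have spanq: "span ((\<lambda>l. l - q) ` L) = M" if q: "q \<in> L" for q
  proof
    show "span ((\<lambda>l. l - q) ` L) \<subseteq> M" unfolding M_def
    proof (rule span_minimal)
      show "(\<lambda>l. l - q) ` L \<subseteq> span ((\<lambda>l. l - q0) ` L)"
      proof
        fix z assume "z \<in> (\<lambda>l. l - q) ` L"
        then obtain l where l: "l \<in> L" "z = l - q" by blast
        have "(l - q0) - (q - q0) \<in> span ((\<lambda>l. l - q0) ` L)"
          using l q by (intro span_diff span_base) auto
        then show "z \<in> span ((\<lambda>l. l - q0) ` L)" using l by simp
      qed
    qed (rule subspace_span)
    show "M \<subseteq> span ((\<lambda>l. l - q) ` L)" unfolding M_def
    proof (rule span_minimal)
      show "(\<lambda>l. l - q0) ` L \<subseteq> span ((\<lambda>l. l - q) ` L)"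
      proof
        fix z assume "z \<in> (\<lambda>l. l - q0) ` L"
        then obtain l where l: "l \<in> L" "z = l - q0" by blast
        have "(l - q) - (q0 - q) \<in> span ((\<lambda>l. l - q) ` L)"
          using l q0 by (intro span_diff span_base) auto
        then show "z \<in> span ((\<lambda>l. l - q) ` L)" using l by simp
      qed
    qed (rule subspace_span)
  qed
  have TqM: "T q = M" if q: "q \<in> L" for q
  proof
    show "T q \<subseteq> M" unfolding T_def
      using span_minimal[OF tangent_in_span[OF q]] spanq[OF q] unfolding M_def by (simp add: subspace_span)
    show "M \<subseteq> T q" unfolding spanq[OF q, symmetric]
      by (rule span_minimal) (use stepA q in \<open>auto simp: T_def\<close>)
  qed
  have Leq: "L = (+) q0 ` M"
  proof
    show "L \<subseteq> (+) q0 ` M"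
    proof
      fix l assume l: "l \<in> L"
      have "l - q0 \<in> M" unfolding M_def using l by (intro span_base) auto
      then show "l \<in> (+) q0 ` M" by (rule rev_image_eqI) simp
    qed
    show "(+) q0 ` M \<subseteq> L"
    proof
      fix y assume "y \<in> (+) q0 ` M"
      then obtain m where m: "m \<in> M" "y = q0 + m" by blast
      obtain p where p: "p\<in>L" "y \<in> normal_plane L p" using nearest by blast
      have orth: "orthogonal (y - p) v" if "v \<in> M" for v
      proof -
        have vs: "v \<in> span (tangent_space L p)" using that TqM[OF p(1)] unfolding T_def by simp
        show ?thesis
        proof (rule orthogonal_to_span[OF vs])
          fix w assume "w \<in> tangent_space L p"
          then show "orthogonal (y - p) w" using p(2) unfolding normal_plane_def orthogonal_def by auto
        qed
      qed
      have "p - q0 \<in> M" unfolding M_def using p(1) by (intro span_base) auto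
      then have "m - (p - q0) \<in> M" using m(1) unfolding M_def by (rule_tac span_diff) auto
      then have "y - p \<in> M" using m(2) by (simp add: algebra_simps)
      then have "(y - p) \<bullet> (y - p) = 0" using orth unfolding orthogonal_def by blast
      then show "y \<in> L" using p(1) by simp
    qed
  qed
  have subM: "subspace M" unfolding M_def by (rule subspace_span)
  have "dim M = r"
  proof -
    have ex: "\<exists>U V (\<psi>::'a \<Rightarrow> 'a) (\<phi>::'a \<Rightarrow> 'a) E.
      open U \<and> q0 \<in> U \<and> open V \<and> subspace E \<and> dim E = r \<and>
      smooth_on U \<psi> \<and> smooth_on V \<phi> \<and> \<psi> ` U = V \<and>
      (\<forall>x\<in>U. \<phi> (\<psi> x) = x) \<and> (\<forall>y\<in>V. \<psi> (\<phi> y) = y) \<and>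
      \<psi> ` (L \<inter> U) = V \<inter> E"
      using assms(3) q0 unfolding regular_submanifold_def by (rule bspec)
    from ex obtain U V and \<psi> \<phi> :: "'a \<Rightarrow> 'a" and E where
      U: "open U" "q0 \<in> U" and V: "open V" and E: "subspace E" "dim E = r"
      and sm: "smooth_on U \<psi>" "smooth_on V \<phi>" and img: "\<psi> ` U = V"
      and inv1: "\<forall>x\<in>U. \<phi> (\<psi> x) = x" and inv2: "\<forall>y\<in>V. \<psi> (\<phi> y) = y"
      and slice: "\<psi> ` (L \<inter> U) = V \<inter> E"
      by (elim exE conjE) blast
    have dpsi_on: "\<psi> differentiable_on U"
      using spec[OF sm(1)[unfolded smooth_on_def], of "[]"] by simp
    have dphi_on: "\<phi> differentiable_on V"
      using spec[OF sm(2)[unfolded smooth_on_def], of "[]"] by simp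
    define a where "a = \<psi> q0"
    have aVE: "a \<in> V \<inter> E" using slice q0 U(2) unfolding a_def by blast
    have phia: "\<phi> a = q0" using inv1 U(2) unfolding a_def by blast
    have "\<psi> differentiable (at q0)" using dpsi_on U differentiable_on_eq_differentiable_at by blast
    then obtain D\<psi> where dpsi: "(\<psi> has_derivative D\<psi>) (at q0)"
      unfolding differentiable_def by blast
    have "\<phi> differentiable (at a)" using dphi_on V aVE differentiable_on_eq_differentiable_at by blast
    then obtain D\<phi> where dphi: "(\<phi> has_derivative D\<phi>) (at a)"
      unfolding differentiable_def by blast
    have c1: "(\<psi> \<circ> \<phi> has_derivative D\<psi> \<circ> D\<phi>) (at a)"
      using diff_chain_at[OF dphi, of \<psi> D\<psi>] dpsi phia by simp
    have "((\<lambda>x. x) has_derivative D\<psi> \<circ> D\<phi>) (at a)"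
      by (rule has_derivative_transform_within_open[OF c1 V]) (use aVE inv2 in auto)
    then have id1: "D\<psi> \<circ> D\<phi> = (\<lambda>x. x)" by (rule has_derivative_unique[OF _ has_derivative_ident])
    have c2: "(\<phi> \<circ> \<psi> has_derivative D\<phi> \<circ> D\<psi>) (at q0)"
      using diff_chain_at[OF dpsi, of \<phi> D\<phi>] dphi unfolding a_def by simp
    have "((\<lambda>x. x) has_derivative D\<phi> \<circ> D\<psi>) (at q0)"
      by (rule has_derivative_transform_within_open[OF c2 U(1)]) (use U(2) inv1 in auto)
    then have id2: "D\<phi> \<circ> D\<psi> = (\<lambda>x. x)" by (rule has_derivative_unique[OF _ has_derivative_ident])
    have linpsi: "linear D\<psi>" using dpsi has_derivative_linear by blast
    have linphi: "linear D\<phi>" using dphi has_derivative_linear by blast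
    have spanE: "span E = E" using E(1) by (simp add: span_eq_iff)
    have psiM: "D\<psi> v \<in> E" if v: "v \<in> M" for v
    proof -
      obtain d where d: "d > 0" "ball q0 d \<subseteq> U" using U open_contains_ball by blast
      define e where "e = d / (norm v + 1)"
      have nv: "norm v + 1 > 0" by (smt (verit) norm_ge_zero)
      have e: "e > 0" using d(1) nv unfolding e_def by (rule divide_pos_pos)
      have dl: "((\<lambda>t. q0 + t *\<^sub>R v) has_derivative (\<lambda>t. t *\<^sub>R v)) (at 0)"
        by (auto intro!: derivative_eq_intros)
      have dg: "((\<lambda>t. \<psi> (q0 + t *\<^sub>R v) - a) has_derivative (\<lambda>t. D\<psi> (t *\<^sub>R v) - 0)) (at 0)"
        using has_derivative_diff[OF diff_chain_at[OF dl, of \<psi> D\<psi>] has_derivative_const[of a]] dpsi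
        by (simp add: o_def)
      have "(\<lambda>t::real. D\<psi> (t *\<^sub>R v) - 0) 1 \<in> span E"
      proof (rule deriv_in_span[OF dg e])
        fix t :: real assume t: "\<bar>t\<bar> < e"
        have "\<bar>t\<bar> * norm v \<le> e * norm v" using t by (simp add: mult_right_mono)
        also have "\<dots> < d"
        proof -
          have "e * norm v = d * norm v / (norm v + 1)" unfolding e_def by simp
          also have "\<dots> < d" using d(1) nv by (simp add: pos_divide_less_eq)
          finally show ?thesis .
        qed
        finally have "norm (t *\<^sub>R v) < d" by simp
        then have inU: "q0 + t *\<^sub>R v \<in> U" using d(2) by (auto simp: dist_norm)
        have "t *\<^sub>R v \<in> M" using subM v by (simp add: subspace_scale)
        then have "q0 + t *\<^sub>R v \<in> (+) q0 ` M" by (rule imageI)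
        then have inL: "q0 + t *\<^sub>R v \<in> L" using Leq by simp
        have "\<psi> (q0 + t *\<^sub>R v) \<in> \<psi> ` (L \<inter> U)" using inU inL by simp
        then have "\<psi> (q0 + t *\<^sub>R v) \<in> E" unfolding slice by simp
        then show "\<psi> (q0 + t *\<^sub>R v) - a \<in> span E" unfolding spanE
          using aVE E(1) by (simp add: subspace_diff)
      qed
      then show ?thesis using spanE by simp
    qed
    have phiE: "D\<phi> v \<in> M" if v: "v \<in> E" for v
    proof -
      obtain d where d: "d > 0" "ball a d \<subseteq> V" using V aVE open_contains_ball by blast
      define e where "e = d / (norm v + 1)"
      have nv: "norm v + 1 > 0" by (smt (verit) norm_ge_zero)
      have e: "e > 0" using d(1) nv unfolding e_def by (rule divide_pos_pos)
      have dl: "((\<lambda>t. a + t *\<^sub>R v) has_derivative (\<lambda>t. t *\<^sub>R v)) (at 0)"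
        by (auto intro!: derivative_eq_intros)
      have dg: "((\<lambda>t. \<phi> (a + t *\<^sub>R v) - q0) has_derivative (\<lambda>t. D\<phi> (t *\<^sub>R v) - 0)) (at 0)"
        using has_derivative_diff[OF diff_chain_at[OF dl, of \<phi> D\<phi>] has_derivative_const[of q0]] dphi
        by (simp add: o_def)
      have "(\<lambda>t::real. D\<phi> (t *\<^sub>R v) - 0) 1 \<in> span ((\<lambda>l. l - q0) ` L)"
      proof (rule deriv_in_span[OF dg e])
        fix t :: real assume t: "\<bar>t\<bar> < e"
        have "\<bar>t\<bar> * norm v \<le> e * norm v" using t by (simp add: mult_right_mono)
        also have "\<dots> < d"
        proof -
          have "e * norm v = d * norm v / (norm v + 1)" unfolding e_def by simp
          also have "\<dots> < d" using d(1) nv by (simp add: pos_divide_less_eq)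
          finally show ?thesis .
        qed
        finally have "norm (t *\<^sub>R v) < d" by simp
        then have inV: "a + t *\<^sub>R v \<in> V" using d(2) by (auto simp: dist_norm)
        have "a + t *\<^sub>R v \<in> E" using E(1) aVE v by (simp add: subspace_add subspace_scale)
        with inV have "a + t *\<^sub>R v \<in> \<psi> ` (L \<inter> U)" unfolding slice by simp
        then obtain x where x0: "x \<in> L \<inter> U" "a + t *\<^sub>R v = \<psi> x" by (rule imageE)
        then have x: "x \<in> L" "x \<in> U" "\<psi> x = a + t *\<^sub>R v" by auto
        then have "\<phi> (a + t *\<^sub>R v) = x" using inv1 by auto
        then show "\<phi> (a + t *\<^sub>R v) - q0 \<in> span ((\<lambda>l. l - q0) ` L)"
          using x(1) by (simp add: span_base)
      qed
      then show ?thesis unfolding M_def by (simp add: linear_scale[OF linphi])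
    qed
    have injpsi: "inj_on D\<psi> (span M)"
    proof (rule inj_onI)
      fix x y assume "D\<psi> x = D\<psi> y"
      then have "D\<phi> (D\<psi> x) = D\<phi> (D\<psi> y)" by simp
      then show "x = y" using fun_cong[OF id2, of x] fun_cong[OF id2, of y] by simp
    qed
    have injphi: "inj_on D\<phi> (span E)"
    proof (rule inj_onI)
      fix x y assume "D\<phi> x = D\<phi> y"
      then have "D\<psi> (D\<phi> x) = D\<psi> (D\<phi> y)" by simp
      then show "x = y" using fun_cong[OF id1, of x] fun_cong[OF id1, of y] by simp
    qed
    have "dim M = dim (D\<psi> ` M)" using dim_image_eq[OF linpsi injpsi] by simp
    also have "\<dots> \<le> dim E" using psiM by (intro dim_subset) auto
    finally have le1: "dim M \<le> dim E" .
    have "dim E = dim (D\<phi> ` E)" using dim_image_eq[OF linphi injphi] by simp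
    also have "\<dots> \<le> dim M" using phiE by (intro dim_subset) auto
    finally have "dim E \<le> dim M" .
    with le1 E(2) show ?thesis by simp
  qed
  have "affine L" unfolding Leq using affine_translation subspace_imp_affine[OF subM] by blast
  moreover have "aff_dim L = int r"
    unfolding Leq aff_dim_translation_eq aff_dim_subspace[OF subM] using \<open>dim M = r\<close> by simp
  ultimately show ?thesis by simp
qed

end
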